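(* Let $\lambda>0$, $d_v>0$, $\epsilon\ge0$, $m=\lambda\pi d_v^2$, $k\ge0$, and let $r_1,\dots,r_k\ge0$ be given ranges, with $f(\mathbf x)$ the set of all orderings of $(r_1,\dots,r_k)$. With $A_i=\{\mathbf y\in\mathbb R^2:\ |\|\mathbf y\|_2-r_i|\le\epsilon\}$ and $|A_i|$ its Lebesgue measure, $$\mathbb P\big[\Delta_s(f(\mathbf x),F(\mathbf 0))\le\epsilon\big]\le m^k e^{-m}\prod_{i=1}^k\frac{|A_i|}{\pi d_v^2}.$$
   Context: Landmarks seen from the origin are the points of a homogeneous Poisson point process $\Phi_{\mathbf 0}$ of intensity $\lambda$ on $\mathbb R^2$; a landmark is visible from $\mathbf 0$ if its distance to $\mathbf 0$ is at most $d_v$, and $N_{\mathbf 0}$ is the number of visible landmarks. The random measurement $F(\mathbf 0)$ is the set of all vectors in $\mathbb R^{N_{\mathbf 0}}$ obtained by listing, in some order, the distances from $\mathbf 0$ to the visible landmarks. For vectors, $\Delta_v(\mathbf u,\mathbf w)=\|\mathbf u-\mathbf w\|_\infty$ if they have the same dimension (equal to $0$ if both are empty) and $\infty$ otherwise; for sets of vectors, $\Delta_s(f,F)=\min_{\mathbf u\in f,\mathbf w\in F}\Delta_v(\mathbf u,\mathbf w)$. *)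

theory Defs
  imports "HOL-Probability.Probability" "HOL-Library.Multiset"
begin

definition poisson_pp :: "'w measure \<Rightarrow> real \<Rightarrow> ('w \<Rightarrow> (real^2) set) \<Rightarrow> bool" where
  "poisson_pp M lam Phi \<longleftrightarrow>
     prob_space M \<and>
     (\<forall>w\<in>space M. \<forall>B. bounded B \<longrightarrow> finite (Phi w \<inter> B)) \<and>
     (\<forall>B \<in> sets lborel. bounded B \<longrightarrow>
        (\<lambda>w. card (Phi w \<inter> B)) \<in> measurable M (count_space UNIV) \<and>
        (\<forall>n::nat. measure M {w\<in>space M. card (Phi w \<inter> B) = n}
            = (lam * measure lborel B) ^ n / fact n * exp (- (lam * measure lborel B)))) \<and>
     (\<forall>(I::nat set) B. finite I \<longrightarrow> (\<forall>i\<in>I. B i \<in> sets lborel \<and> bounded (B i)) \<longrightarrow>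
        disjoint_family_on B I \<longrightarrow>
        prob_space.indep_vars M (\<lambda>_. count_space UNIV) (\<lambda>i w. card (Phi w \<inter> B i)) I)"

definition Delta_v :: "real list \<Rightarrow> real list \<Rightarrow> ereal" where
  "Delta_v u w = (if length u = length w then
      (if u = [] then 0 else ereal (Max {\<bar>u ! i - w ! i\<bar> | i. i < length u}))
    else \<infinity>)"

definition Delta_s :: "real list set \<Rightarrow> real list set \<Rightarrow> ereal" where
  "Delta_s f F = (INF u\<in>f. INF w\<in>F. Delta_v u w)"

definition orderings :: "real list \<Rightarrow> real list set" where
  "orderings rs = {xs. mset xs = mset rs}"

definition measurement :: "real \<Rightarrow> (real^2) set \<Rightarrow> real list set" where
  "measurement dv P = {map norm ps | ps. distinct ps \<and> set ps = P \<inter> cball 0 dv}"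

definition annulus :: "real \<Rightarrow> real \<Rightarrow> (real^2) set" where
  "annulus r eps = {y. \<bar>norm y - r\<bar> \<le> eps}"

end

theory Submission
  imports Defs "HOL-Combinatorics.Permutations"
begin

lemma INF_finite_ex: fixes g :: "'a \<Rightarrow> ereal" assumes "finite A" "A \<noteq> {}" "(INF x\<in>A. g x) \<le> c" shows "\<exists>x\<in>A. g x \<le> c"
proof -
  have "(INF x\<in>A. g x) = Min (g ` A)"
    using assms(1,2) by (intro cInf_eq_Min) auto
  also have "\<dots> \<in> g ` A" using assms(1,2) by (intro Min_in) auto
  finally show ?thesis using assms(3) by auto
qed

lemma annulus_meas: "annulus r e \<in> sets lborel"
proof -
  have "closed (annulus r e)" unfolding annulus_def
    by (intro closed_Collect_le continuous_intros)
  then show ?thesis by simp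
qed

lemma annulus_bounded: "bounded (annulus r e)"
  unfolding annulus_def bounded_iff
  by (rule exI[of _ "\<bar>r\<bar> + \<bar>e\<bar>"]) auto

lemma fin_orderings: "finite (orderings rs)"
proof -
  have "orderings rs \<subseteq> {xs. set xs \<subseteq> set rs \<and> length xs = length rs}"
    unfolding orderings_def by (auto dest: mset_eq_setD mset_eq_length)
  moreover have "finite {xs. set xs \<subseteq> set rs \<and> length xs = length rs}"
    by (rule finite_lists_length_eq) simp
  ultimately show ?thesis by (rule finite_subset)
qed

lemma Delta_v_le: assumes "Delta_v u v \<le> ereal e" 
  shows "length u = length v" "\<And>i. i < length u \<Longrightarrow> \<bar>u!i - v!i\<bar> \<le> e"
proof -
  show l: "length u = length v" using assms unfolding Delta_v_def by (auto split: if_splits)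
  fix i assume i: "i < length u"
  then have "u \<noteq> []" by auto
  then have "Max {\<bar>u ! i - v ! i\<bar> | i. i < length u} \<le> e" using assms l unfolding Delta_v_def by auto
  moreover have "\<bar>u ! i - v ! i\<bar> \<le> Max {\<bar>u ! i - v ! i\<bar> | i. i < length u}"
    by (rule Max_ge) (use i in auto)
  ultimately show "\<bar>u!i - v!i\<bar> \<le> e" by linarith
qed

lemma measure_cball2: assumes "dv \<ge> 0" shows "measure lborel (cball (0::real^2) dv) = pi * dv^2"
  using content_cball[where c="0::real^2" and r=dv] assms by (simp add: unit_ball_vol_2)

lemma fin_measurement: assumes "finite (P \<inter> cball 0 dv)"
  shows "finite (measurement dv P)" "measurement dv P \<noteq> {}"
proof -
  let ?S = "P \<inter> cball 0 dv"
  have 1: "measurement dv P = map norm ` {ps. distinct ps \<and> set ps = ?S}"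
    unfolding measurement_def by (rule setcompr_eq_image)
  have 2: "{ps. distinct ps \<and> set ps = ?S} \<subseteq> {xs. set xs \<subseteq> ?S \<and> length xs \<le> card ?S}"
  proof
    fix ps assume "ps \<in> {ps. distinct ps \<and> set ps = ?S}"
    then have a: "distinct ps" "set ps = ?S" by auto
    have "length ps = card ?S" using distinct_card[OF a(1)] a(2) by simp
    then show "ps \<in> {xs. set xs \<subseteq> ?S \<and> length xs \<le> card ?S}"
      using a(2) by simp
  qed
  have 3: "finite {xs. set xs \<subseteq> ?S \<and> length xs \<le> card ?S}"
    by (rule finite_lists_length_le) (rule assms)
  show "finite (measurement dv P)"
    unfolding 1 by (rule finite_imageI, rule finite_subset[OF 2 3])
  obtain ps where "set ps = ?S" "distinct ps" using finite_distinct_list[OF assms] by blast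
  then have "map norm ps \<in> measurement dv P" unfolding measurement_def
    by (intro CollectI exI[of _ ps]) simp
  then show "measurement dv P \<noteq> {}" by blast
qed

theorem lemma11:
  fixes M :: "'w measure" and Phi :: "'w \<Rightarrow> (real^2) set"
    and lam dv eps :: real and rs :: "real list"
  assumes "poisson_pp M lam Phi" and "lam > 0" and "dv > 0" and "eps \<ge> 0"
    and "\<forall>r\<in>set rs. r \<ge> 0"
  shows "measure M {w\<in>space M. Delta_s (orderings rs) (measurement dv (Phi w)) \<le> ereal eps}
    \<le> (lam * pi * dv^2) ^ length rs * exp (- (lam * pi * dv^2))
       * (\<Prod>r\<leftarrow>rs. measure lborel (annulus r eps) / (pi * dv^2))"
proof -
  have PP: "prob_space M" using assms(1) unfolding poisson_pp_def by blast
  have locfin: "\<forall>w\<in>space M. \<forall>B. bounded B \<longrightarrow> finite (Phi w \<inter> B)"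
    using assms(1) unfolding poisson_pp_def by blast
  have cnt_ax: "\<forall>B \<in> sets lborel. bounded B \<longrightarrow>
        (\<lambda>w. card (Phi w \<inter> B)) \<in> measurable M (count_space UNIV) \<and>
        (\<forall>n::nat. measure M {w\<in>space M. card (Phi w \<inter> B) = n}
            = (lam * measure lborel B) ^ n / fact n * exp (- (lam * measure lborel B)))"
    using assms(1) unfolding poisson_pp_def by blast
  have ind_ax: "\<forall>(I::nat set) B. finite I \<longrightarrow> (\<forall>i\<in>I. B i \<in> sets lborel \<and> bounded (B i)) \<longrightarrow>
        disjoint_family_on B I \<longrightarrow>
        prob_space.indep_vars M (\<lambda>_. count_space UNIV) (\<lambda>i w. card (Phi w \<inter> B i)) I"
    using assms(1) unfolding poisson_pp_def by blast
  interpret prob_space M by (rule PP)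
  define k where "k = length rs"
  define K where "K = {..<k}"
  define A where "A i = annulus (rs!i) eps" for i
  define D where "D = cball (0::real^2) dv"
  define tp where "tp y = {i\<in>K. y \<in> A i}" for y
  define V where "V T = {y\<in>D. tp y = T}" for T
  define F where "F = PiE K (\<lambda>i. {T. T \<subseteq> K \<and> i \<in> T})"
  define cnt where "cnt f T = card {j\<in>K. f j = T}" for f :: "nat \<Rightarrow> nat set" and T
  define E where "E f = {w\<in>space M. \<forall>T\<in>Pow K. card (Phi w \<inter> V T) = cnt f T}" for f
  define ev where "ev = {w\<in>space M. Delta_s (orderings rs) (measurement dv (Phi w)) \<le> ereal eps}"
  define m where "m = lam * pi * dv^2"
  have finK: "finite K" unfolding K_def by simp
  have finF: "finite F" unfolding F_def using finK by (intro finite_PiE) auto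
  have measA: "A i \<in> sets lborel" for i unfolding A_def by (rule annulus_meas)
  have measD: "D \<in> sets lborel" unfolding D_def using borel_closed[OF closed_cball] by simp
  have bdD: "bounded D" unfolding D_def by simp
  have measV: "V T \<in> sets lborel" for T
  proof (cases "T \<subseteq> K")
    case True
    have "V T = D \<inter> (\<Inter>i\<in>K. if i \<in> T then A i else UNIV - A i)"
    proof (rule set_eqI)
      fix y
      have "y \<in> V T \<longleftrightarrow> y \<in> D \<and> (\<forall>i\<in>K. (y \<in> A i) = (i \<in> T))"
        unfolding V_def tp_def using True by blast
      also have "\<dots> \<longleftrightarrow> y \<in> D \<inter> (\<Inter>i\<in>K. if i \<in> T then A i else UNIV - A i)"
        by auto
      finally show "y \<in> V T \<longleftrightarrow> y \<in> D \<inter> (\<Inter>i\<in>K. if i \<in> T then A i else UNIV - A i)" .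
    qed
    also have "\<dots> \<in> sets lborel"
      using measD measA by (intro sets.Int sets.countable_INT'') (auto intro: countable_finite[OF finK])
    finally show ?thesis .
  next
    case False
    then have "V T = {}" unfolding V_def tp_def by auto
    then show ?thesis by simp
  qed
  have VD: "V T \<subseteq> D" for T unfolding V_def by auto
  have bdV: "bounded (V T)" for T using bounded_subset[OF bdD VD] .
  have measD_val: "measure lborel D = pi * dv^2" unfolding D_def using assms(3) by (intro measure_cball2) simp
  have finV: "emeasure lborel (V T) \<noteq> \<infinity>" for T
    using emeasure_bounded_finite[OF bdV[of T]] by simp
  have sumV: "(\<Sum>T\<in>Pow K. measure lborel (V T)) = pi * dv^2"
  proof -
    have "D = (\<Union>T\<in>Pow K. V T)"
    proof (intro equalityI subsetI)
      fix y assume "y \<in> D"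
      then have "y \<in> V (tp y)" "tp y \<in> Pow K" unfolding V_def tp_def by auto
      then show "y \<in> (\<Union>T\<in>Pow K. V T)" by blast
    qed (use VD in blast)
    then have "measure lborel D = (\<Sum>T\<in>Pow K. measure lborel (V T))"
      using finK measV finV
      by (simp only:) (intro measure_finite_Union, auto simp: disjoint_family_on_def V_def)
    then show ?thesis using measD_val by simp
  qed
  have sumVj: "(\<Sum>T\<in>{T. T \<subseteq> K \<and> j \<in> T}. measure lborel (V T)) \<le> measure lborel (A j)" if "j \<in> K" for j
  proof -
    have "A j \<inter> D = (\<Union>T\<in>{T. T \<subseteq> K \<and> j \<in> T}. V T)"
    proof (intro equalityI subsetI)
      fix y assume "y \<in> A j \<inter> D"
      then have "y \<in> V (tp y)" "tp y \<in> {T. T \<subseteq> K \<and> j \<in> T}" unfolding V_def tp_def using that by auto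
      then show "y \<in> (\<Union>T\<in>{T. T \<subseteq> K \<and> j \<in> T}. V T)" by blast
    next
      fix y assume "y \<in> (\<Union>T\<in>{T. T \<subseteq> K \<and> j \<in> T}. V T)"
      then obtain T where "j \<in> T" "y \<in> D" "tp y = T" unfolding V_def by blast
      then show "y \<in> A j \<inter> D" unfolding tp_def by blast
    qed
    then have "measure lborel (A j \<inter> D) = (\<Sum>T\<in>{T. T \<subseteq> K \<and> j \<in> T}. measure lborel (V T))"
      using finK measV finV
      by (simp only:) (intro measure_finite_Union, auto simp: disjoint_family_on_def V_def)
    moreover have "measure lborel (A j \<inter> D) \<le> measure lborel (A j)"
      apply (rule measure_mono_fmeasurable)
      using measA measD emeasure_bounded_finite[OF annulus_bounded, of "rs!j" eps]
      by (auto simp: fmeasurable_def A_def)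
    ultimately show ?thesis by simp
  qed
  note cntV = cnt_ax[rule_format, OF measV bdV]
  have cntT: "(\<lambda>w. card (Phi w \<inter> V T)) \<in> measurable M (count_space UNIV)" for T
    using cntV[of T] by (rule conjunct1)
  have probT0: "\<forall>n::nat. prob {w\<in>space M. card (Phi w \<inter> V T) = n} = (lam * measure lborel (V T)) ^ n / fact n * exp (- (lam * measure lborel (V T)))" for T
    using cntV[of T] by (rule conjunct2)
  note probT = probT0[rule_format]
  have evT: "{w\<in>space M. card (Phi w \<inter> V T) = n} \<in> events" for T n
  proof -
    have "{w\<in>space M. card (Phi w \<inter> V T) = n} = (\<lambda>w. card (Phi w \<inter> V T)) -` {n} \<inter> space M" by blast
    then show ?thesis using measurable_sets[OF cntT] by simp
  qed
  have finPK: "finite (Pow K)" using finK by simp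
  have pre: "(\<lambda>w. card (Phi w \<inter> V T)) -` {n} \<inter> space M = {w\<in>space M. card (Phi w \<inter> V T) = n}" for T n
    by blast
  have EI: "E f = (\<Inter>T\<in>Pow K. (\<lambda>w. card (Phi w \<inter> V T)) -` {cnt f T} \<inter> space M)" for f
    unfolding E_def pre by auto
  have measE: "E f \<in> events" for f
    unfolding EI pre using evT finPK by (intro sets.finite_INT) auto
  obtain dec where dec: "bij_betw dec {0..<card (Pow K)} (Pow K)"
    using ex_bij_betw_nat_finite[OF finPK] by blast
  define I where "I = {0..<card (Pow K)}"
  have PKI: "Pow K = dec ` I" using dec unfolding I_def by (simp add: bij_betw_def)
  have Ine: "I \<noteq> {}" unfolding I_def using finK by (simp add: card_Pow)
  have disjV: "V T \<inter> V T' = {}" if "T \<noteq> T'" for T T' unfolding V_def using that by blast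
  have indep: "indep_vars (\<lambda>_. count_space UNIV) (\<lambda>n w. card (Phi w \<inter> V (dec n))) I"
  proof -
    have "disjoint_family_on (\<lambda>n. V (dec n)) I"
      unfolding disjoint_family_on_def
    proof (intro ballI impI)
      fix n n' assume "n \<in> I" "n' \<in> I" "n \<noteq> n'"
      then have "dec n \<noteq> dec n'" using dec unfolding I_def bij_betw_def inj_on_def by blast
      then show "V (dec n) \<inter> V (dec n') = {}" by (rule disjV)
    qed
    moreover have "finite I" unfolding I_def by simp
    ultimately show ?thesis
      by (intro ind_ax[rule_format]) (use measV bdV in blast)+
  qed
  have probE_eq: "prob (E f) = (\<Prod>T\<in>Pow K. prob {w\<in>space M. card (Phi w \<inter> V T) = cnt f T})" for f
  proof -
    have "E f = (\<Inter>n\<in>I. (\<lambda>w. card (Phi w \<inter> V (dec n))) -` {cnt f (dec n)} \<inter> space M)"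
      unfolding EI PKI by (simp add: image_image)
    then have "prob (E f) = (\<Prod>n\<in>I. prob ((\<lambda>w. card (Phi w \<inter> V (dec n))) -` {cnt f (dec n)} \<inter> space M))"
      using indep_varsD_finite[OF indep Ine] unfolding I_def by simp
    also have "\<dots> = (\<Prod>T\<in>Pow K. prob ((\<lambda>w. card (Phi w \<inter> V T)) -` {cnt f T} \<inter> space M))"
      using prod.reindex_bij_betw[OF dec[folded I_def], of "\<lambda>T. prob ((\<lambda>w. card (Phi w \<inter> V T)) -` {cnt f T} \<inter> space M)"] .
    finally show ?thesis unfolding pre .
  qed
  have fact_le: "x / fact n \<le> x" if "0 \<le> x" for x :: real and n :: nat
  proof -
    have "1 \<le> (fact n :: real)" by (rule fact_ge_1)
    then show ?thesis using that by (simp add: divide_le_eq mult_le_cancel_left1)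
  qed
  have probE: "prob (E f) \<le> lam^k * exp (- m) * (\<Prod>j\<in>K. measure lborel (V (f j)))" if "f \<in> F" for f
  proof -
    have fK: "f ` K \<subseteq> Pow K" using that unfolding F_def by (auto simp: PiE_def Pi_def)
    have "prob (E f) = (\<Prod>T\<in>Pow K. (lam * measure lborel (V T)) ^ cnt f T / fact (cnt f T) * exp (- (lam * measure lborel (V T))))"
      unfolding probE_eq probT ..
    also have "\<dots> \<le> (\<Prod>T\<in>Pow K. lam ^ cnt f T * measure lborel (V T) ^ cnt f T * exp (- (lam * measure lborel (V T))))"
    proof (rule prod_mono, rule conjI)
      fix T
      have 0: "0 \<le> (lam * measure lborel (V T)) ^ cnt f T" using assms(2) by simp
      show "0 \<le> (lam * measure lborel (V T)) ^ cnt f T / fact (cnt f T) * exp (- (lam * measure lborel (V T)))"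
        using 0 by simp
      show "(lam * measure lborel (V T)) ^ cnt f T / fact (cnt f T) * exp (- (lam * measure lborel (V T)))
          \<le> lam ^ cnt f T * measure lborel (V T) ^ cnt f T * exp (- (lam * measure lborel (V T)))"
        using fact_le[OF 0, of "cnt f T"] by (intro mult_right_mono) (simp_all add: power_mult_distrib)
    qed
    also have "\<dots> = (\<Prod>T\<in>Pow K. lam ^ cnt f T) * (\<Prod>T\<in>Pow K. measure lborel (V T) ^ cnt f T) * (\<Prod>T\<in>Pow K. exp (- (lam * measure lborel (V T))))"
      by (simp add: prod.distrib)
    also have "(\<Prod>T\<in>Pow K. lam ^ cnt f T) = lam ^ k"
    proof -
      have "(\<Sum>T\<in>Pow K. cnt f T) = (\<Sum>j\<in>K. (1::nat))"
        unfolding cnt_def using sum.group[OF finK finPK fK, of "\<lambda>_. 1::nat"] by simp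
      then have "(\<Sum>T\<in>Pow K. cnt f T) = k" unfolding K_def by simp
      then show ?thesis by (simp add: power_sum[symmetric])
    qed
    also have "(\<Prod>T\<in>Pow K. exp (- (lam * measure lborel (V T)))) = exp (- m)"
      using sumV finPK by (simp add: exp_sum[symmetric] sum_negf sum_distrib_left[symmetric] m_def mult.assoc)
    also have "(\<Prod>T\<in>Pow K. measure lborel (V T) ^ cnt f T) = (\<Prod>j\<in>K. measure lborel (V (f j)))"
    proof -
      have "(\<Prod>T\<in>Pow K. \<Prod>j\<in>{j. j \<in> K \<and> f j = T}. measure lborel (V (f j))) = (\<Prod>j\<in>K. measure lborel (V (f j)))"
        by (rule prod.group[OF finK finPK fK])
      moreover have "(\<Prod>j\<in>{j. j \<in> K \<and> f j = T}. measure lborel (V (f j))) = measure lborel (V T) ^ cnt f T" for T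
      proof -
        have "(\<Prod>j\<in>{j. j \<in> K \<and> f j = T}. measure lborel (V (f j))) = (\<Prod>j\<in>{j. j \<in> K \<and> f j = T}. measure lborel (V T))"
          by (rule prod.cong) auto
        then show ?thesis unfolding cnt_def by simp
      qed
      ultimately show ?thesis by simp
    qed
    finally show ?thesis by (simp add: mult_ac)
  qed
  have incl: "ev \<subseteq> (\<Union>f\<in>F. E f)"
  proof
    fix w assume "w \<in> ev"
    then have wM: "w \<in> space M" and dle: "Delta_s (orderings rs) (measurement dv (Phi w)) \<le> ereal eps"
      unfolding ev_def by auto
    have finP: "finite (Phi w \<inter> cball 0 dv)" using locfin wM by simp
    have rsO: "rs \<in> orderings rs" unfolding orderings_def by simp
    obtain u where u: "u \<in> orderings rs" and uI: "(INF v\<in>measurement dv (Phi w). Delta_v u v) \<le> ereal eps"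
      using INF_finite_ex[OF fin_orderings, of rs "\<lambda>u. INF v\<in>measurement dv (Phi w). Delta_v u v"] rsO dle
      unfolding Delta_s_def by blast
    obtain v where v: "v \<in> measurement dv (Phi w)" and duv: "Delta_v u v \<le> ereal eps"
      using INF_finite_ex[OF fin_measurement(1)[OF finP] fin_measurement(2)[OF finP] uI] by blast
    from v obtain ps where vps: "v = map norm ps" and ps: "distinct ps" "set ps = Phi w \<inter> cball 0 dv"
      unfolding measurement_def by blast
    have mu: "mset u = mset rs" using u unfolding orderings_def by simp
    have lu: "length u = k" using mset_eq_length[OF mu] unfolding k_def .
    have lps: "length ps = k" using Delta_v_le(1)[OF duv] lu vps by simp
    have close: "\<bar>u!i - norm (ps!i)\<bar> \<le> eps" if "i < k" for i
      using Delta_v_le(2)[OF duv, of i] lu lps vps that by simp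
    obtain p where p: "p permutes {..<length rs}" "permute_list p rs = u"
      using mset_eq_permutation[OF mu] by blast
    have pK: "p permutes K" using p(1) unfolding K_def k_def .
    have uval: "u!i = rs!(p i)" if "i < k" for i
      using permute_list_nth[OF p(1), of i] that p(2) unfolding k_def by simp
    have psA: "ps!i \<in> A (p i)" if "i < k" for i
      using close[OF that] uval[OF that] unfolding A_def annulus_def by (simp add: abs_minus_commute)
    have psD: "ps!i \<in> D" if "i < k" for i
    proof -
      have "ps!i \<in> set ps" using that lps by simp
      then show ?thesis using ps(2) unfolding D_def by blast
    qed
    define f where "f = (\<lambda>j\<in>K. tp (ps ! inv p j))"
    have invK: "inv p j \<in> K" if "j \<in> K" for j
      using permutes_in_image[OF permutes_inv[OF pK]] that by simp
    have fF: "f \<in> F"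
      unfolding f_def F_def
    proof (subst restrict_PiE_iff, intro ballI)
      fix j assume j: "j \<in> K"
      have "ps ! inv p j \<in> A (p (inv p j))" using psA invK[OF j] unfolding K_def by simp
      then have "ps ! inv p j \<in> A j" using permutes_inverses(1)[OF pK] by simp
      then show "tp (ps ! inv p j) \<in> {T. T \<subseteq> K \<and> j \<in> T}" unfolding tp_def using j by auto
    qed
    have "w \<in> E f"
      unfolding E_def
    proof (intro CollectI conjI ballI wM)
      fix T assume "T \<in> Pow K"
      have 1: "Phi w \<inter> V T = nth ps ` {i\<in>K. tp (ps!i) = T}"
      proof (intro equalityI subsetI)
        fix y assume "y \<in> Phi w \<inter> V T"
        then have "y \<in> set ps" "tp y = T" using ps(2) unfolding V_def D_def by auto
        then obtain i where "i < k" "ps!i = y" "tp (ps!i) = T" using lps by (auto simp: in_set_conv_nth)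
        then show "y \<in> nth ps ` {i\<in>K. tp (ps!i) = T}" unfolding K_def by blast
      next
        fix y assume "y \<in> nth ps ` {i\<in>K. tp (ps!i) = T}"
        then obtain i where i: "i < k" "y = ps!i" "tp (ps!i) = T" unfolding K_def by blast
        then have "y \<in> set ps" using lps by simp
        then show "y \<in> Phi w \<inter> V T" using ps(2) i psD[OF i(1)] unfolding V_def by auto
      qed
      have 2: "card (nth ps ` {i\<in>K. tp (ps!i) = T}) = card {i\<in>K. tp (ps!i) = T}"
        by (rule card_image, rule inj_on_nth[OF ps(1)]) (auto simp: K_def lps)
      have 3: "{j\<in>K. f j = T} = p ` {i\<in>K. tp (ps!i) = T}"
      proof (intro equalityI subsetI)
        fix j assume "j \<in> {j\<in>K. f j = T}"
        then have j: "j \<in> K" "tp (ps ! inv p j) = T" unfolding f_def by auto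
        then have "inv p j \<in> {i\<in>K. tp (ps!i) = T}" using invK by auto
        moreover have "p (inv p j) = j" using permutes_inverses(1)[OF pK] .
        ultimately show "j \<in> p ` {i\<in>K. tp (ps!i) = T}" by (metis imageI)
      next
        fix j assume "j \<in> p ` {i\<in>K. tp (ps!i) = T}"
        then obtain i where i: "i \<in> K" "tp (ps!i) = T" "j = p i" by blast
        have "j \<in> K" using permutes_in_image[OF pK] i by simp
        moreover have "inv p j = i" using permutes_inverses(2)[OF pK] i(3) by simp
        ultimately show "j \<in> {j\<in>K. f j = T}" unfolding f_def using i by simp
      qed
      have 4: "card (p ` {i\<in>K. tp (ps!i) = T}) = card {i\<in>K. tp (ps!i) = T}"
        by (rule card_image, rule inj_on_subset[OF permutes_inj[OF pK]]) simp
      show "card (Phi w \<inter> V T) = cnt f T" unfolding cnt_def 1 2 3 4 ..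
    qed
    then show "w \<in> (\<Union>f\<in>F. E f)" using fF by blast
  qed
  have nnV: "0 \<le> measure lborel (V T)" for T by simp
  have "prob ev \<le> prob (\<Union>f\<in>F. E f)"
    using incl measE finF by (intro finite_measure_mono) auto
  also have "\<dots> \<le> (\<Sum>f\<in>F. prob (E f))"
    using measE finF by (intro finite_measure_subadditive_finite) auto
  also have "\<dots> \<le> (\<Sum>f\<in>F. lam^k * exp (- m) * (\<Prod>j\<in>K. measure lborel (V (f j))))"
    using probE by (intro sum_mono) auto
  also have "\<dots> = lam^k * exp (- m) * (\<Sum>f\<in>F. \<Prod>j\<in>K. measure lborel (V (f j)))"
    by (simp add: sum_distrib_left)
  also have "(\<Sum>f\<in>F. \<Prod>j\<in>K. measure lborel (V (f j))) = (\<Prod>j\<in>K. \<Sum>T\<in>{T. T \<subseteq> K \<and> j \<in> T}. measure lborel (V T))"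
    unfolding F_def using finK by (intro prod_sum_PiE[symmetric]) auto
  also have "lam^k * exp (- m) * \<dots> \<le> lam^k * exp (- m) * (\<Prod>j\<in>K. measure lborel (A j))"
    using assms(2) sumVj by (intro mult_left_mono prod_mono) (auto intro: sum_nonneg)
  also have "\<dots> = (lam * pi * dv^2) ^ length rs * exp (- (lam * pi * dv^2))
       * (\<Prod>r\<leftarrow>rs. measure lborel (annulus r eps) / (pi * dv^2))"
  proof -
    have "(\<Prod>r\<leftarrow>rs. measure lborel (annulus r eps) / (pi * dv^2))
        = (\<Prod>j\<in>K. measure lborel (A j) / (pi * dv^2))"
      unfolding prod.list_conv_set_nth K_def k_def A_def by (simp add: atLeast0LessThan)
    also have "\<dots> = (\<Prod>j\<in>K. measure lborel (A j)) / (pi * dv^2) ^ k"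
      by (simp add: prod_dividef K_def)
    finally have 1: "(\<Prod>r\<leftarrow>rs. measure lborel (annulus r eps) / (pi * dv^2)) = (\<Prod>j\<in>K. measure lborel (A j)) / (pi * dv^2) ^ k" .
    have "(pi * dv^2) ^ k > 0" using assms(3) by simp
    then show ?thesis unfolding 1 m_def k_def[symmetric] using assms(3)
      by (simp add: power_mult_distrib field_simps)
  qed
  finally show ?thesis unfolding ev_def .
qed

end
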